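(* The Recursive Measure satisfies the added-YES-blocker postulate. For every SVG $\mathcal{G}=(N,\mathcal{W})$ and all $i,j\in N$ with $j$ not a dummy in $\mathcal{G}$: $$\frac{RM'^+_i(\mathcal{G})}{RM'^+_j(\mathcal{G})}=\frac{RM'^+_i(\mathcal{G}^Y)}{RM'^+_j(\mathcal{G}^Y)}.$$
   Context: A simple voting game (SVG) is a pair $\mathcal{G}=(N,\mathcal{W})$ with $N$ a nonempty finite set of players and $\mathcal{W}\subseteq 2^N$ monotone, $\emptyset\notin\mathcal{W}$, $N\in\mathcal{W}$. Divisions are identified with their YES-sets. Decisiveness and success: - Player $k$ is YES-decisive in $S$ if $k\in S\in\mathcal{W}$ and $S\setminus\{k\}\notin\mathcal{W}$. - Player $k$ is NO-decisive in $S$ if $k\notin S\notin\mathcal{W}$ and $S\cup\{k\}\in\mathcal{W}$. - A dummy is never decisive. - Player $k$ is successful in $S$ if ($k\in S\in\mathcal{W}$) or ($k\notin S\notin\mathcal{W}$). Loyal children: if $S\in\mathcal{W}$, they are the sets $S\setminus\{m\}\in\mathcal{W}$ with $m\in S$. If $S\notin\mathcal{W}$, they are the sets $S\cup\{m\}\notin\mathcal{W}$ with $m\notin S$. Recursive efficacy score $\alpha_k(S)$: - $\alpha_k(S)=1$ if $k$ is decisive; - $\alpha_k(S)=0$ if $k$ is not successful; - otherwise, the average of $\alpha_k$ over the loyal children. For a game with $m$ players, the a priori RM YES-power is $RM'^+_k=2^{-m}\sum_{S\ni k}\alpha_k(S)$. For a new player $0\notin N$, $\mathcal{G}^Y=(N\cup\{0\},\{S\cup\{0\}:S\in\mathcal{W}\})$.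 *)

theory Defs
  imports Complex_Main
begin

definition svg :: "'a set \<Rightarrow> 'a set set \<Rightarrow> bool" where
  "svg N W \<longleftrightarrow> finite N \<and> N \<noteq> {} \<and> W \<subseteq> Pow N
     \<and> (\<forall>S T. S \<in> W \<longrightarrow> S \<subseteq> T \<longrightarrow> T \<subseteq> N \<longrightarrow> T \<in> W)
     \<and> {} \<notin> W \<and> N \<in> W"

definition yes_decisive :: "'a set set \<Rightarrow> 'a \<Rightarrow> 'a set \<Rightarrow> bool" where
  "yes_decisive W k S \<longleftrightarrow> k \<in> S \<and> S \<in> W \<and> S - {k} \<notin> W"

definition no_decisive :: "'a set set \<Rightarrow> 'a \<Rightarrow> 'a set \<Rightarrow> bool" where
  "no_decisive W k S \<longleftrightarrow> k \<notin> S \<and> S \<notin> W \<and> insert k S \<in> W"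

definition decisive :: "'a set set \<Rightarrow> 'a \<Rightarrow> 'a set \<Rightarrow> bool" where
  "decisive W k S \<longleftrightarrow> yes_decisive W k S \<or> no_decisive W k S"

definition dummy :: "'a set \<Rightarrow> 'a set set \<Rightarrow> 'a \<Rightarrow> bool" where
  "dummy N W k \<longleftrightarrow> k \<in> N \<and> (\<forall>S. S \<subseteq> N \<longrightarrow> \<not> decisive W k S)"

definition successful :: "'a set set \<Rightarrow> 'a \<Rightarrow> 'a set \<Rightarrow> bool" where
  "successful W k S \<longleftrightarrow> (k \<in> S \<and> S \<in> W) \<or> (k \<notin> S \<and> S \<notin> W)"

definition loyal_children :: "'a set \<Rightarrow> 'a set set \<Rightarrow> 'a set \<Rightarrow> 'a set set" where
  "loyal_children N W S =
     (if S \<in> W then {S - {m} | m. m \<in> S \<and> S - {m} \<in> W}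
      else {insert m S | m. m \<in> N \<and> m \<notin> S \<and> insert m S \<notin> W})"

text \<open>The recursion
  depth never exceeds card N (each step strictly shrinks a winning set or strictly
  grows a losing set, staying inside N), so fuel Suc (card N) yields the score.\<close>
fun alpha_aux :: "nat \<Rightarrow> 'a set \<Rightarrow> 'a set set \<Rightarrow> 'a \<Rightarrow> 'a set \<Rightarrow> real" where
  "alpha_aux 0 N W k S = 0"
| "alpha_aux (Suc n) N W k S =
     (if decisive W k S then 1
      else if \<not> successful W k S then 0
      else (let C = loyal_children N W S in
            if C = {} then 0 else (\<Sum>T\<in>C. alpha_aux n N W k T) / real (card C)))"

definition alpha :: "'a set \<Rightarrow> 'a set set \<Rightarrow> 'a \<Rightarrow> 'a set \<Rightarrow> real" where
  "alpha N W k S = alpha_aux (Suc (card N)) N W k S"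

definition RM_yes :: "'a set \<Rightarrow> 'a set set \<Rightarrow> 'a \<Rightarrow> real" where
  "RM_yes N W k = (\<Sum>S\<in>{S. S \<subseteq> N \<and> k \<in> S}. alpha N W k S) / 2 ^ card N"

definition add_yes_blocker_W :: "'a set set \<Rightarrow> 'a \<Rightarrow> 'a set set" where
  "add_yes_blocker_W W p0 = {insert p0 S | S. S \<in> W}"

end

theory Submission
  imports Defs
begin

definition mu :: "'a set \<Rightarrow> 'a set set \<Rightarrow> 'a set \<Rightarrow> nat" where
  "mu N W S = (if S \<in> W then card S else card (N - S))"

lemma children_sub:
  assumes "finite N" "S \<subseteq> N" "T \<in> loyal_children N W S"
  shows "T \<subseteq> N \<and> mu N W T < mu N W S"
proof (cases "S \<in> W")
  case True
  then obtain m where m: "T = S - {m}" "m \<in> S" "S - {m} \<in> W"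
    using assms(3) by (auto simp: loyal_children_def)
  have "finite S" using assms finite_subset by blast
  then have "card (S - {m}) < card S" using m by (meson card_Diff1_less)
  then show ?thesis using m True assms by (auto simp: mu_def)
next
  case False
  then obtain m where m: "T = insert m S" "m \<in> N" "m \<notin> S" "insert m S \<notin> W"
    using assms(3) by (auto simp: loyal_children_def)
  have "N - insert m S = (N - S) - {m}" by auto
  moreover have "card ((N - S) - {m}) < card (N - S)"
    using m assms by (meson DiffI card_Diff1_less finite_Diff)
  ultimately show ?thesis using m False assms by (auto simp: mu_def)
qed

lemma stab:
  assumes "finite N"
  shows "S \<subseteq> N \<Longrightarrow> Suc (mu N W S) \<le> n \<Longrightarrow> Suc (mu N W S) \<le> m
     \<Longrightarrow> alpha_aux n N W k S = alpha_aux m N W k S"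
proof (induction n arbitrary: S m)
  case 0
  then show ?case by simp
next
  case (Suc n)
  then obtain m' where m': "m = Suc m'" by (cases m) auto
  have eq: "\<And>T. T \<in> loyal_children N W S \<Longrightarrow> alpha_aux n N W k T = alpha_aux m' N W k T"
  proof -
    fix T assume T: "T \<in> loyal_children N W S"
    from children_sub[OF assms Suc.prems(1) T] have "T \<subseteq> N" "mu N W T < mu N W S" by auto
    then show "alpha_aux n N W k T = alpha_aux m' N W k T"
      using Suc.IH Suc.prems m' by simp
  qed
  show ?case unfolding m' by (simp add: Let_def sum.cong[OF refl eq])
qed

lemma mu_le: "finite N \<Longrightarrow> S \<subseteq> N \<Longrightarrow> mu N W S \<le> card N"
  unfolding mu_def by (auto intro: card_mono)

lemma memW':
  assumes "W \<subseteq> Pow N" "p0 \<notin> N" "S \<subseteq> N"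
  shows "insert p0 S \<in> add_yes_blocker_W W p0 \<longleftrightarrow> S \<in> W"
proof
  assume "insert p0 S \<in> add_yes_blocker_W W p0"
  then obtain T where T: "insert p0 S = insert p0 T" "T \<in> W" by (auto simp: add_yes_blocker_W_def)
  have "p0 \<notin> T" "p0 \<notin> S" using T assms by auto
  then have "S = T" using T(1) by (metis Diff_insert_absorb)
  then show "S \<in> W" using T by simp
qed (auto simp: add_yes_blocker_W_def)

lemma children_Y:
  assumes "W \<subseteq> Pow N" "p0 \<notin> N" "S \<subseteq> N"
  shows "loyal_children (insert p0 N) (add_yes_blocker_W W p0) (insert p0 S)
       = insert p0 ` loyal_children N W S"
proof (cases "S \<in> W")
  case True
  have A: "insert p0 S \<in> add_yes_blocker_W W p0" using True memW'[OF assms] by simp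
  have B: "\<And>m. m \<in> S \<Longrightarrow> insert p0 S - {m} = insert p0 (S - {m})" using assms by auto
  have C: "insert p0 S - {p0} \<notin> add_yes_blocker_W W p0"
    using assms by (auto simp: add_yes_blocker_W_def)
  have D: "\<And>m. m \<in> S \<Longrightarrow> insert p0 (S - {m}) \<in> add_yes_blocker_W W p0 \<longleftrightarrow> S - {m} \<in> W"
    using memW'[OF assms(1,2)] assms(3) by blast
  show ?thesis
  proof (rule set_eqI)
    fix X
    show "X \<in> loyal_children (insert p0 N) (add_yes_blocker_W W p0) (insert p0 S) \<longleftrightarrow>
          X \<in> insert p0 ` loyal_children N W S"
    proof
      assume "X \<in> loyal_children (insert p0 N) (add_yes_blocker_W W p0) (insert p0 S)"
      then obtain m where m: "X = insert p0 S - {m}" "m \<in> insert p0 S"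
          "insert p0 S - {m} \<in> add_yes_blocker_W W p0"
        using A unfolding loyal_children_def by auto
      have "m \<noteq> p0" using m C by blast
      then have "m \<in> S" using m by blast
      then have "S - {m} \<in> loyal_children N W S" "X = insert p0 (S - {m})"
        using m B D True unfolding loyal_children_def by auto
      then show "X \<in> insert p0 ` loyal_children N W S" by blast
    next
      assume "X \<in> insert p0 ` loyal_children N W S"
      then obtain m where m: "X = insert p0 (S - {m})" "m \<in> S" "S - {m} \<in> W"
        using True unfolding loyal_children_def by auto
      then show "X \<in> loyal_children (insert p0 N) (add_yes_blocker_W W p0) (insert p0 S)"
      proof -
        have "X = insert p0 S - {m}" "insert p0 S - {m} \<in> add_yes_blocker_W W p0"
          using m B[of m] D[of m] by auto
        then show ?thesis using A m(2) unfolding loyal_children_def by auto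
      qed
    qed
  qed
next
  case False
  have A: "insert p0 S \<notin> add_yes_blocker_W W p0" using False memW'[OF assms] by simp
  have D: "\<And>m. m \<in> N \<Longrightarrow> insert p0 (insert m S) \<in> add_yes_blocker_W W p0 \<longleftrightarrow> insert m S \<in> W"
    using memW'[OF assms(1,2)] assms(3) by blast
  have E: "insert p0 (insert p0 S) \<in> add_yes_blocker_W W p0 \<longleftrightarrow> False" using A by simp
  show ?thesis
  proof (rule set_eqI)
    fix X
    show "X \<in> loyal_children (insert p0 N) (add_yes_blocker_W W p0) (insert p0 S) \<longleftrightarrow>
          X \<in> insert p0 ` loyal_children N W S"
    proof
      assume "X \<in> loyal_children (insert p0 N) (add_yes_blocker_W W p0) (insert p0 S)"
      then obtain m where m: "X = insert m (insert p0 S)" "m \<in> insert p0 N" "m \<notin> insert p0 S"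
          "insert m (insert p0 S) \<notin> add_yes_blocker_W W p0"
        using A unfolding loyal_children_def by auto
      have "m \<in> N" "m \<noteq> p0" using m by auto
      then have "insert m S \<in> loyal_children N W S" "X = insert p0 (insert m S)"
        using m D[of m] False unfolding loyal_children_def by (auto simp: insert_commute)
      then show "X \<in> insert p0 ` loyal_children N W S" by blast
    next
      assume "X \<in> insert p0 ` loyal_children N W S"
      then obtain m where m: "X = insert p0 (insert m S)" "m \<in> N" "m \<notin> S" "insert m S \<notin> W"
        using False unfolding loyal_children_def by auto
      have "m \<noteq> p0" using m assms by auto
      then show "X \<in> loyal_children (insert p0 N) (add_yes_blocker_W W p0) (insert p0 S)"
        using A m D[of m] unfolding loyal_children_def by (auto simp: insert_commute)
    qed
  qed
qed

lemma alpha_Y: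
  assumes "W \<subseteq> Pow N" "p0 \<notin> N" "i \<in> N"
  shows "S \<subseteq> N \<Longrightarrow> alpha_aux n (insert p0 N) (add_yes_blocker_W W p0) i (insert p0 S)
     = alpha_aux n N W i S"
proof (induction n arbitrary: S)
  case 0
  then show ?case by simp
next
  case (Suc n)
  let ?W' = "add_yes_blocker_W W p0"
  have ip: "i \<noteq> p0" using assms by auto
  have m1: "insert p0 S \<in> ?W' \<longleftrightarrow> S \<in> W" using memW'[OF assms(1,2) Suc.prems] .
  have m2: "insert p0 S - {i} \<in> ?W' \<longleftrightarrow> S - {i} \<in> W"
  proof -
    have "insert p0 S - {i} = insert p0 (S - {i})" using ip by auto
    moreover have "S - {i} \<subseteq> N" using Suc.prems by auto
    ultimately show ?thesis using memW'[OF assms(1,2), of "S - {i}"] by simp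
  qed
  have m3: "insert i (insert p0 S) \<in> ?W' \<longleftrightarrow> insert i S \<in> W"
    using memW'[OF assms(1,2), of "insert i S"] Suc.prems assms(3)
    by (simp add: insert_commute)
  have dec: "decisive ?W' i (insert p0 S) \<longleftrightarrow> decisive W i S"
    using m1 m2 m3 ip by (simp add: decisive_def yes_decisive_def no_decisive_def)
  have suc: "successful ?W' i (insert p0 S) \<longleftrightarrow> successful W i S"
    using m1 ip by (simp add: successful_def)
  have ch: "loyal_children (insert p0 N) ?W' (insert p0 S) = insert p0 ` loyal_children N W S"
    using children_Y[OF assms(1,2) Suc.prems] .
  have sub: "\<And>T. T \<in> loyal_children N W S \<Longrightarrow> T \<subseteq> N"
  proof -
    fix T assume "T \<in> loyal_children N W S"
    then show "T \<subseteq> N" using Suc.prems unfolding loyal_children_def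
      by (cases "S \<in> W") auto
  qed
  have inj: "inj_on (insert p0) (loyal_children N W S)"
  proof (rule inj_onI)
    fix x y assume xy: "x \<in> loyal_children N W S" "y \<in> loyal_children N W S" "insert p0 x = insert p0 y"
    have "p0 \<notin> x" "p0 \<notin> y" using sub[OF xy(1)] sub[OF xy(2)] assms(2) by auto
    then show "x = y" using xy(3) by (metis Diff_insert_absorb)
  qed
  have sm: "(\<Sum>T\<in>insert p0 ` loyal_children N W S. alpha_aux n (insert p0 N) ?W' i T)
      = (\<Sum>T\<in>loyal_children N W S. alpha_aux n N W i T)"
    by (simp add: sum.reindex[OF inj] Suc.IH sub)
  show ?case using dec suc ch sm card_image[OF inj] by (simp add: Let_def)
qed

theorem lemma3:
  fixes N :: "'a set" and W :: "'a set set" and p0 i j :: 'a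
  assumes "svg N W"
    and "p0 \<notin> N"
    and "i \<in> N" and "j \<in> N"
    and "\<not> dummy N W j"
  shows "RM_yes N W i / RM_yes N W j =
         RM_yes (insert p0 N) (add_yes_blocker_W W p0) i
           / RM_yes (insert p0 N) (add_yes_blocker_W W p0) j"
proof -
  have fin: "finite N" and WP: "W \<subseteq> Pow N" using assms(1) by (auto simp: svg_def)
  let ?W' = "add_yes_blocker_W W p0"
  have key: "RM_yes (insert p0 N) ?W' k = RM_yes N W k / 2" if k: "k \<in> N" for k
  proof -
    have cN: "card (insert p0 N) = Suc (card N)" using fin assms(2) by simp
    have split: "{S. S \<subseteq> insert p0 N \<and> k \<in> S} =
        insert p0 ` {S. S \<subseteq> N \<and> k \<in> S} \<union> {S. S \<subseteq> N \<and> k \<in> S}"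
      (is "_ = ?A \<union> ?B")
    proof (rule set_eqI)
      fix S show "S \<in> {S. S \<subseteq> insert p0 N \<and> k \<in> S} \<longleftrightarrow> S \<in> ?A \<union> ?B"
      proof
        assume "S \<in> {S. S \<subseteq> insert p0 N \<and> k \<in> S}"
        then show "S \<in> ?A \<union> ?B"
          using k assms(2) by (cases "p0 \<in> S") (auto simp: image_iff intro!: exI[of _ "S - {p0}"])
      qed (use k in auto)
    qed
    have disj: "?A \<inter> ?B = {}" using assms(2) by auto
    have finB: "finite ?B" using fin by simp
    have inj: "inj_on (insert p0) ?B"
      by (rule inj_onI) (use assms(2) in \<open>metis (no_types, lifting) Diff_insert_absorb mem_Collect_eq subset_iff\<close>)
    have zero: "alpha (insert p0 N) ?W' k S = 0" if "S \<in> ?B" for S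
    proof -
      have "S \<notin> ?W'" using that assms(2) by (auto simp: add_yes_blocker_W_def)
      then show ?thesis using that
        by (simp add: alpha_def decisive_def yes_decisive_def no_decisive_def successful_def)
    qed
    have eqA: "alpha (insert p0 N) ?W' k (insert p0 S) = alpha N W k S" if "S \<in> ?B" for S
    proof -
      have "alpha (insert p0 N) ?W' k (insert p0 S) = alpha_aux (Suc (Suc (card N))) N W k S"
        unfolding alpha_def cN by (rule alpha_Y[OF WP assms(2) k]) (use that in blast)
      also have "\<dots> = alpha N W k S" unfolding alpha_def
        by (rule stab[OF fin]) (use mu_le[OF fin, of S W] that in auto)
      finally show ?thesis .
    qed
    have "(\<Sum>S\<in>{S. S \<subseteq> insert p0 N \<and> k \<in> S}. alpha (insert p0 N) ?W' k S)
        = (\<Sum>S\<in>?A. alpha (insert p0 N) ?W' k S) + (\<Sum>S\<in>?B. alpha (insert p0 N) ?W' k S)"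
      unfolding split by (rule sum.union_disjoint) (use finB disj in auto)
    also have "\<dots> = (\<Sum>S\<in>?B. alpha N W k S)"
    proof -
      have "(\<Sum>S\<in>?A. alpha (insert p0 N) ?W' k S) = (\<Sum>S\<in>?B. alpha (insert p0 N) ?W' k (insert p0 S))"
        by (rule sum.reindex[OF inj, unfolded comp_def])
      also have "\<dots> = (\<Sum>S\<in>?B. alpha N W k S)" by (rule sum.cong[OF refl eqA])
      moreover have "(\<Sum>S\<in>?B. alpha (insert p0 N) ?W' k S) = 0"
        by (rule sum.neutral) (use zero in blast)
      ultimately show ?thesis by simp
    qed
    finally show ?thesis unfolding RM_yes_def cN by simp
  qed
  show ?thesis unfolding key[OF assms(3)] key[OF assms(4)]
    by (cases "RM_yes N W j = 0") (simp_all add: field_simps)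
qed

end
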